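(* Let $A\ge 1$ and $0<\sigma<1$. Let $W(\sigma,A)$ be as in the context, let ${}_2F_1(1,2A+2,2A+3,\sigma)=(2A+2)\sum_{n\ge0}\frac{\sigma^n}{n+2A+2}$, and let $Q(\sigma,A)=\sum_{i=0}^{11}q_i(\sigma)A^{11-i}(1-\sigma)^{11-i}$ with $q_0=64$, $q_1=32(4+7\sigma)$, $q_2=80(-3+13\sigma)$, $q_3=48(-12+3\sigma+39\sigma^2-17\sigma^3)$, $q_4=12(17-278\sigma+400\sigma^2-90\sigma^3-65\sigma^4)$, $q_5=6(980+1365\sigma+424\sigma^2+1374\sigma^3-876\sigma^4+109\sigma^5)$, $q_6=35363+88857\sigma+75432\sigma^2+45698\sigma^3-1965\sigma^4-2715\sigma^5+1250\sigma^6$, $q_7=100336+279172\sigma+377163\sigma^2+267688\sigma^3+118786\sigma^4-12360\sigma^5+2611\sigma^6+244\sigma^7$, $q_8=2(74901+220667\sigma+395067\sigma^2+388137\sigma^3+222947\sigma^4+77061\sigma^5-2895\sigma^6+1355\sigma^7-240\sigma^8)$, $q_9=3(40659+122280\sigma+287397\sigma^2+350940\sigma^3+284873\sigma^4+126322\sigma^5+37701\sigma^6+724\sigma^7+206\sigma^8-102\sigma^9)$, $q_{10}=9(5673+16595\sigma+51926\sigma^2+83180\sigma^3+83930\sigma^4+50678\sigma^5+17870\sigma^6+4994\sigma^7+155\sigma^8+5\sigma^9-6\sigma^{10})$, $q_{11}=27(315+840\sigma+3465\sigma^2+9576\sigma^3+6510\sigma^4+9864\sigma^5+3150\sigma^6+1000\sigma^7+279\sigma^8+\sigma^{10})$.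 Define $$\widetilde H(\sigma,A)=\frac{12}{35}\sigma^2\left\{\frac{Q(\sigma,A)}{(1-\sigma)^3W(\sigma,A)^3}-A(A-1)(A^2-1)(4A^2-1)(4A^2-9)\frac{(1-\sigma)^6}{W(\sigma,A)^2}\,{}_2F_1(1,2A+2,2A+3,\sigma)\right\}.$$ Then for every $a>0$, $\lambda\ge0$ with $A=\sqrt{1+3\lambda/a^2}$, the function $H(S)=a^3\widetilde H(e^{-aS},A)$ is the unique solution on $(0,\infty)$ of $$4Y(S,a,\lambda)H(S)+\Bigl(\tfrac{d}{dS}Y(S,a,\lambda)\Bigr)^2+6H'(S)=0$$ satisfying $H(S)\to0$ as $S\to\infty$, where $Y$ is as in the context. Moreover $\widetilde H(\sigma,A)=\frac{108\,\sigma^2}{(A+1)(2A+1)^2}+O(\sigma^3)$ as $\sigma\to0$.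
   Context: $W(\sigma,A)=4A^3(1-\sigma)^3+12A^2(1-\sigma)^2(1+\sigma)+A(1-\sigma)(11+38\sigma+11\sigma^2)+3(1+\sigma)(1+8\sigma+\sigma^2)$, $U(\sigma,A)=2A^2(1-\sigma)^2+5A(1-\sigma)(1+\sigma)+3(1+3\sigma+\sigma^2)$, and with $\sigma=e^{-aS}$, $Y(S,a,\lambda)=a\bigl(-3A-36\,\sigma U(\sigma,A)/((1-\sigma)W(\sigma,A))\bigr)$. *)

theory Defs
  imports "HOL-Analysis.Analysis" "HOL-Library.Landau_Symbols"
begin

definition W :: "real \<Rightarrow> real \<Rightarrow> real" where
  "W \<sigma> A = 4*A^3*(1-\<sigma>)^3 + 12*A^2*(1-\<sigma>)^2*(1+\<sigma>)
     + A*(1-\<sigma>)*(11 + 38*\<sigma> + 11*\<sigma>^2) + 3*(1+\<sigma>)*(1 + 8*\<sigma> + \<sigma>^2)"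

definition U :: "real \<Rightarrow> real \<Rightarrow> real" where
  "U \<sigma> A = 2*A^2*(1-\<sigma>)^2 + 5*A*(1-\<sigma>)*(1+\<sigma>) + 3*(1 + 3*\<sigma> + \<sigma>^2)"

definition Apar :: "real \<Rightarrow> real \<Rightarrow> real" where
  "Apar a lam = sqrt (1 + 3*lam/a^2)"

definition Y :: "real \<Rightarrow> real \<Rightarrow> real \<Rightarrow> real" where
  "Y S a lam = (let A = Apar a lam; \<sigma> = exp (-a*S) in
     a * (-3*A - 36*\<sigma>*U \<sigma> A / ((1-\<sigma>) * W \<sigma> A)))"

definition hyp2F1 :: "real \<Rightarrow> real \<Rightarrow> real" where
  "hyp2F1 \<sigma> A = (2*A+2) * (\<Sum>n. \<sigma>^n / (real n + 2*A + 2))"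

definition qcoef :: "nat \<Rightarrow> real \<Rightarrow> real" where
  "qcoef i x = [64,
     32*(4+7 * x),
     80*(-3+13 * x),
     48*(-12+3 * x+39 * x^2-17 * x^3),
     12*(17-278 * x+400 * x^2-90 * x^3-65 * x^4),
     6*(980+1365 * x+424 * x^2+1374 * x^3-876 * x^4+109 * x^5),
     35363+88857 * x+75432 * x^2+45698 * x^3-1965 * x^4-2715 * x^5+1250 * x^6,
     100336+279172 * x+377163 * x^2+267688 * x^3+118786 * x^4-12360 * x^5+2611 * x^6+244 * x^7,
     2*(74901+220667 * x+395067 * x^2+388137 * x^3+222947 * x^4+77061 * x^5-2895 * x^6+1355 * x^7-240 * x^8),
     3*(40659+122280 * x+287397 * x^2+350940 * x^3+284873 * x^4+126322 * x^5+37701 * x^6+724 * x^7+206 * x^8-102 * x^9),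
     9*(5673+16595 * x+51926 * x^2+83180 * x^3+83930 * x^4+50678 * x^5+17870 * x^6+4994 * x^7+155 * x^8+5 * x^9-6 * x^10),
     27*(315+840 * x+3465 * x^2+9576 * x^3+6510 * x^4+9864 * x^5+3150 * x^6+1000 * x^7+279 * x^8+x^10)] ! i"

definition Q :: "real \<Rightarrow> real \<Rightarrow> real" where
  "Q \<sigma> A = (\<Sum>i\<le>11. qcoef i \<sigma> * A^(11-i) * (1-\<sigma>)^(11-i))"

definition Htilde :: "real \<Rightarrow> real \<Rightarrow> real" where
  "Htilde \<sigma> A = 12/35 * \<sigma>^2 *
     (Q \<sigma> A / ((1-\<sigma>)^3 * (W \<sigma> A)^3)
      - A*(A-1)*(A^2-1)*(4*A^2-1)*(4*A^2-9) * (1-\<sigma>)^6 / (W \<sigma> A)^2 * hyp2F1 \<sigma> A)"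

definition H :: "real \<Rightarrow> real \<Rightarrow> real \<Rightarrow> real" where
  "H a lam S = a^3 * Htilde (exp (-a*S)) (Apar a lam)"

definition solves_ode :: "real \<Rightarrow> real \<Rightarrow> (real \<Rightarrow> real) \<Rightarrow> bool" where
  "solves_ode a lam G \<longleftrightarrow> (\<forall>S>0. (\<lambda>s. Y s a lam) differentiable (at S) \<and> G differentiable (at S) \<and>
      4 * Y S a lam * G S + (deriv (\<lambda>s. Y s a lam) S)^2 + 6 * deriv G S = 0)"

end

theory Submission imports Defs "HOL-Real_Asymp.Real_Asymp" begin

definition Qe :: "real \<Rightarrow> real \<Rightarrow> real" where "Qe s A = (8505 + 51057 * A + 121977 * A^2 + 149802 * A^3 + 100336 * A^4 + 35363 * A^5 + 5880 * A^6 + 204 * A^7 - 576 * A^8 - 240 * A^9 + 128 * A^10 + 64 * A^11 + 22680 * s + 98298 * s * A + 122886 * s * A^2 - 8072 * s * A^3 - 122172 * s * A^4 - 87958 * s * A^5 - 27090 * s * A^6 - 4764 * s * A^7 + 4752 * s * A^8 + 3200 * s * A^9 - 1056 * s * A^10 - 704 * s * A^11 + 93555 * s^2 + 317979 * s^2 * A + 250488 * s^2 * A^2 - 84462 * s^2 * A^3 - 137509 * s^2 * A^4 - 15223 * s^2 * A^5 + 41604 * s^2 * A^6 + 32436 * s^2 * A^7 - 15408 * s^2 * A^8 - 18000 * s^2 * A^9 + 3520 * s^2 * A^10 + 3520 * s^2 * A^11 + 258552 * s^3 + 281286 * s^3 * A - 304722 * s^3 * A^2 - 419928 * s^3 * A^3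 + 32724 * s^3 * A^4 + 203478 * s^3 * A^5 - 1770 * s^3 * A^6 - 111876 * s^3 * A^7 + 20496 * s^3 * A^8 + 57600 * s^3 * A^9 - 5280 * s^3 * A^10 - 10560 * s^3 * A^11 + 175770 * s^4 + 6750 * s^4 * A - 388830 * s^4 * A^2 + 46140 * s^4 * A^3 + 294660 * s^4 * A^4 - 187890 * s^4 * A^5 - 92160 * s^4 * A^6 + 231480 * s^4 * A^7 + 10560 * s^4 * A^8 - 117600 * s^4 * A^9 + 21120 * s^4 * A^11 + 266328 * s^5 - 299268 * s^5 * A - 277452 * s^5 * A^2 + 355128 * s^5 * A^3 - 110856 * s^5 * A^4 + 118692 * s^5 * A^5 + 192540 * s^5 * A^6 - 306264 * s^5 * A^7 - 85344 * s^5 * A^8 + 161280 * s^5 * A^9 + 14784 * s^5 * A^10 - 29568 * s^5 * A^11 + 85050 * s^6 - 295272 * s^6 * A + 209790 * s^6 * A^2 + 93252 * s^6 * A^3 + 71178 * s^6 * A^4 - 173502 * s^6 * A^5 - 252744 * s^6 * A^6 + 260904 * s^6 * A^7 + 152544 * s^6 * A^8 - 151200 * s^6 * A^9 - 29568 * s^6 * A^10 + 29568 * s^6 * A^11 + 27000 * s^7 - 115884 * s^7 * A + 154932 * s^7 * A^2 + 36552 * s^7 * A^3 - 291816 * s^7 * A^4 + 139308 * s^7 * A^5 + 231516 * s^7 * A^6 - 134856 * s^7 * A^7 - 153312 * s^7 * A^8 + 96000 * s^7 * A^9 + 31680 * s^7 * A^10 - 21120 * s^7 * A^11 + 7533 *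 s^8 - 43551 * s^8 * A + 109377 * s^8 * A^2 - 180102 * s^8 * A^3 + 182916 * s^8 * A^4 - 15873 * s^8 * A^5 - 138840 * s^8 * A^6 + 32316 * s^8 * A^7 + 96384 * s^8 * A^8 - 39600 * s^8 * A^9 - 21120 * s^8 * A^10 + 10560 * s^8 * A^11 - 1350 * s^9 * A + 630 * s^9 * A^2 + 15360 * s^9 * A^3 - 21340 * s^9 * A^4 - 24110 * s^9 * A^5 + 49590 * s^9 * A^6 + 4020 * s^9 * A^7 - 37680 * s^9 * A^8 + 9600 * s^9 * A^9 + 8800 * s^9 * A^10 - 3520 * s^9 * A^11 + 27 * s^10 - 99 * s^10 * A + 1230 * s^10 * A^2 - 4150 * s^10 * A^3 + 1635 * s^10 * A^4 + 8965 * s^10 * A^5 - 9180 * s^10 * A^6 - 4380 * s^10 * A^7 + 8400 * s^10 * A^8 - 1040 * s^10 * A^9 - 2112 * s^10 * A^10 + 704 * s^10 * A^11 + 54 * s^11 * A - 306 * s^11 * A^2 + 480 * s^11 * A^3 + 244 * s^11 * A^4 - 1250 * s^11 * A^5 + 654 * s^11 * A^6 + 780 * s^11 * A^7 - 816 * s^11 * A^8 + 224 * s^11 * A^10 - 64 * s^11 * A^11)"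
definition Qd :: "real \<Rightarrow> real \<Rightarrow> real" where "Qd s A = (22680 + 98298 * A + 122886 * A^2 - 8072 * A^3 - 122172 * A^4 - 87958 * A^5 - 27090 * A^6 - 4764 * A^7 + 4752 * A^8 + 3200 * A^9 - 1056 * A^10 - 704 * A^11 + 187110 * s + 635958 * s * A + 500976 * s * A^2 - 168924 * s * A^3 - 275018 * s * A^4 - 30446 * s * A^5 + 83208 * s * A^6 + 64872 * s * A^7 - 30816 * s * A^8 - 36000 * s * A^9 + 7040 * s * A^10 + 7040 * s * A^11 + 775656 * s^2 + 843858 * s^2 * A - 914166 * s^2 * A^2 - 1259784 * s^2 * A^3 + 98172 * s^2 * A^4 + 610434 * s^2 * A^5 - 5310 * s^2 * A^6 - 335628 * s^2 * A^7 + 61488 * s^2 * A^8 + 172800 * s^2 * A^9 - 15840 * s^2 * A^10 - 31680 * s^2 * A^11 + 703080 * s^3 + 27000 * s^3 * A - 1555320 * s^3 * A^2 + 184560 * s^3 * A^3 + 1178640 * s^3 * A^4 - 751560 * s^3 * A^5 - 368640 * s^3 * A^6 + 925920 * s^3 * A^7 + 42240 * s^3 * A^8 - 470400 * s^3 * A^9 + 84480 * s^3 * A^11 + 1331640 * s^4 - 1496340 * s^4 * A - 1387260 * s^4 * A^2 + 1775640 * s^4 * A^3 - 554280 * s^4 * A^4 + 593460 * s^4 * A^5 + 962700 * s^4 * A^6 - 1531320 * s^4 * A^7 - 426720 * s^4 * A^8 + 806400 * s^4 * A^9 + 73920 * s^4 * A^10 - 147840 * s^4 * A^11 + 510300 *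 s^5 - 1771632 * s^5 * A + 1258740 * s^5 * A^2 + 559512 * s^5 * A^3 + 427068 * s^5 * A^4 - 1041012 * s^5 * A^5 - 1516464 * s^5 * A^6 + 1565424 * s^5 * A^7 + 915264 * s^5 * A^8 - 907200 * s^5 * A^9 - 177408 * s^5 * A^10 + 177408 * s^5 * A^11 + 189000 * s^6 - 811188 * s^6 * A + 1084524 * s^6 * A^2 + 255864 * s^6 * A^3 - 2042712 * s^6 * A^4 + 975156 * s^6 * A^5 + 1620612 * s^6 * A^6 - 943992 * s^6 * A^7 - 1073184 * s^6 * A^8 + 672000 * s^6 * A^9 + 221760 * s^6 * A^10 - 147840 * s^6 * A^11 + 60264 * s^7 - 348408 * s^7 * A + 875016 * s^7 * A^2 - 1440816 * s^7 * A^3 + 1463328 * s^7 * A^4 - 126984 * s^7 * A^5 - 1110720 * s^7 * A^6 + 258528 * s^7 * A^7 + 771072 * s^7 * A^8 - 316800 * s^7 * A^9 - 168960 * s^7 * A^10 + 84480 * s^7 * A^11 - 12150 * s^8 * A + 5670 * s^8 * A^2 + 138240 * s^8 * A^3 - 192060 * s^8 * A^4 - 216990 * s^8 * A^5 + 446310 * s^8 * A^6 + 36180 * s^8 * A^7 - 339120 * s^8 * A^8 + 86400 * s^8 * A^9 + 79200 * s^8 * A^10 - 31680 * s^8 * A^11 + 270 * s^9 - 990 * s^9 * A + 12300 * s^9 * A^2 - 41500 * s^9 * A^3 + 16350 * s^9 * A^4 + 89650 * s^9 * A^5 - 91800 * s^9 * A^6 - 43800 * s^9 * A^7 + 84000 *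 s^9 * A^8 - 10400 * s^9 * A^9 - 21120 * s^9 * A^10 + 7040 * s^9 * A^11 + 594 * s^10 * A - 3366 * s^10 * A^2 + 5280 * s^10 * A^3 + 2684 * s^10 * A^4 - 13750 * s^10 * A^5 + 7194 * s^10 * A^6 + 8580 * s^10 * A^7 - 8976 * s^10 * A^8 + 2464 * s^10 * A^10 - 704 * s^10 * A^11)"
definition Wd :: "real \<Rightarrow> real \<Rightarrow> real" where "Wd s A = (27 + 27 * A - 12 * A^2 - 12 * A^3 + 54 * s - 54 * s * A - 24 * s * A^2 + 24 * s * A^3 + 9 * s^2 - 33 * s^2 * A + 36 * s^2 * A^2 - 12 * s^2 * A^3)"
definition Ud :: "real \<Rightarrow> real \<Rightarrow> real" where "Ud s A = (9 - 4 * A^2 + 6 * s - 10 * s * A + 4 * s * A^2)"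
definition KK :: "real \<Rightarrow> real" where "KK A = A*(A-1)*(A^2-1)*(4*A^2-1)*(4*A^2-9)"

definition phic :: "real \<Rightarrow> nat \<Rightarrow> real" where "phic A n = 1 / (real n + 2*A + 2)"
definition phi :: "real \<Rightarrow> real \<Rightarrow> real" where "phi A s = (\<Sum>n. phic A n * s^n)"
definition phid :: "real \<Rightarrow> real \<Rightarrow> real" where "phid A s = (\<Sum>n. diffs (phic A) n * s^n)"

lemma hyp_phi: "hyp2F1 s A = (2*A+2) * phi A s"
  unfolding hyp2F1_def phi_def phic_def by simp

lemma phi_summable:
  assumes "A \<ge> 1" "\<bar>s\<bar> < 1"
  shows "summable (\<lambda>n. phic A n * s^n)"
proof (rule summable_comparison_test)
  show "summable (\<lambda>n. \<bar>s\<bar>^n)" using assms by simp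
  show "\<exists>N. \<forall>n\<ge>N. norm (phic A n * s ^ n) \<le> \<bar>s\<bar> ^ n"
  proof (intro exI allI impI)
    fix n :: nat
    have "0 < real n + 2*A + 2" using assms by simp
    moreover have "1 \<le> real n + 2*A + 2" using assms by simp
    ultimately have "phic A n \<le> 1" "phic A n \<ge> 0" unfolding phic_def by (simp_all add: field_simps)
    then show "norm (phic A n * s ^ n) \<le> \<bar>s\<bar> ^ n"
      by (simp add: abs_mult power_abs mult_left_le_one_le)
  qed
qed

lemma phi_deriv:
  assumes "A \<ge> 1" "\<bar>s\<bar> < 1"
  shows "(phi A has_real_derivative phid A s) (at s)"
  unfolding phi_def[abs_def] phid_def
  by (rule termdiffs_strong'[where K=1]) (use assms phi_summable in auto)

lemma phi_0: "phi A 0 = 1 / (2*A+2)"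
  unfolding phi_def by (simp only: powser_zero) (simp add: phic_def)

lemma phid_eq:
  assumes A: "A \<ge> 1" and s: "\<bar>s\<bar> < 1"
  shows "s * phid A s = 1/(1-s) - (2*A+2) * phi A s"
proof (cases "s = 0")
  case True
  then show ?thesis using A by (simp add: phi_0)
next
  case False
  let ?c = "2*A+2"
  have c: "?c > 0" using A by simp
  have g: "(\<lambda>n. s^Suc n) sums (s * (1/(1-s)))"
    using sums_mult[OF geometric_sums[of s], of s] s by simp
  have f0: "(\<lambda>n. phic A n * s^n) sums phi A s"
    unfolding phi_def using phi_summable[OF A s] by (simp add: summable_sums)
  hence f1: "(\<lambda>n. phic A (Suc n) * s^(Suc n)) sums (phi A s - 1/?c)"
    by (subst sums_Suc_iff) (simp add: phic_def)
  have "(\<lambda>n. s^Suc n - ?c * (phic A (Suc n) * s^(Suc n))) sums (s * (1/(1-s)) - ?c * (phi A s - 1/?c))"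
    by (intro sums_diff g sums_mult f1)
  moreover have "\<And>n. s^Suc n - ?c * (phic A (Suc n) * s^(Suc n)) = s * (diffs (phic A) n * s^n)"
  proof -
    fix n :: nat
    have "real n + 1 + 2*A + 2 > 0" using A by simp
    then show "s^Suc n - ?c * (phic A (Suc n) * s^(Suc n)) = s * (diffs (phic A) n * s^n)"
      unfolding phic_def diffs_def by (simp add: field_simps)
  qed
  ultimately have "(\<lambda>n. s * (diffs (phic A) n * s^n)) sums (s * (1/(1-s)) - ?c * (phi A s - 1/?c))"
    by simp
  hence "(\<lambda>n. (1/s) * (s * (diffs (phic A) n * s^n))) sums ((1/s) * (s * (1/(1-s)) - ?c * (phi A s - 1/?c)))"
    by (rule sums_mult)
  hence "(\<lambda>n. diffs (phic A) n * s^n) sums ((1/s) * (s * (1/(1-s)) - ?c * (phi A s - 1/?c)))"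
    using False by simp
  hence "phid A s = (1/s) * (s * (1/(1-s)) - ?c * (phi A s - 1/?c))"
    unfolding phid_def by (rule sums_unique[symmetric])
  hence "s * phid A s = s * (1/(1-s)) - ?c * (phi A s - 1/?c)" using False by simp
  moreover have d: "1 - s \<noteq> 0" using s by auto
  moreover have "?c * (phi A s - 1/?c) = ?c * phi A s - 1" using c by (simp add: right_diff_distrib)
  moreover have "s*(1/(1-s)) + 1 = 1/(1-s)" using d by (simp add: field_simps)
  ultimately show ?thesis by linarith
qed

lemma Q_Qe: "Q s A = Qe s A"
  unfolding Q_def Qe_def qcoef_def
  by (simp add: eval_nat_numeral sum.atMost_Suc; algebra)

lemma W_deriv: "((\<lambda>s. W s A) has_real_derivative Wd s A) (at s within S)"
  unfolding W_def Wd_def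
  apply (rule derivative_eq_intros refl)+
  by (simp; algebra)

lemma U_deriv: "((\<lambda>s. U s A) has_real_derivative Ud s A) (at s within S)"
  unfolding U_def Ud_def
  apply (rule derivative_eq_intros refl)+
  by (simp; algebra)

lemma Q_deriv: "((\<lambda>s. Q s A) has_real_derivative Qd s A) (at s within S)"
  unfolding Q_Qe Qe_def Qd_def
  apply (rule derivative_eq_intros refl)+
  by (simp; algebra)

lemma W_pos: assumes "A \<ge> 1" "0 \<le> s" "s < 1" shows "W s A > 0"
proof -
  have "4*A^3*(1-s)^3 > 0" using assms by simp
  moreover have "12*A^2*(1-s)^2*(1+s) \<ge> 0" using assms by simp
  moreover have "A*(1-s)*(11 + 38* s + 11* s^2) \<ge> 0" using assms by simp
  moreover have "3*(1+s)*(1 + 8* s + s^2) \<ge> 0" using assms by simp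
  ultimately show ?thesis unfolding W_def by linarith
qed

lemma U_pos: assumes "A \<ge> 1" "0 \<le> s" "s < 1" shows "U s A > 0"
proof -
  have "2*A^2*(1-s)^2 \<ge> 0" using assms by simp
  moreover have "5*A*(1-s)*(1+s) \<ge> 0" using assms by simp
  moreover have "3*(1 + 3* s + s^2) > 0" using assms by (simp add: add_pos_nonneg)
  ultimately show ?thesis unfolding U_def by linarith
qed

definition yfun :: "real \<Rightarrow> real \<Rightarrow> real" where
  "yfun s A = -3*A - 36 * s * U s A / ((1-s) * W s A)"
definition ydf :: "real \<Rightarrow> real \<Rightarrow> real" where
  "ydf s A = -36*((U s A + s * Ud s A)*(1-s)*W s A + s * U s A*W s A - s * U s A*(1-s)*Wd s A)/((1-s)^2*(W s A)^2)"
definition HD :: "real \<Rightarrow> real \<Rightarrow> real" where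
  "HD s A = (let D = 1 - s; w = W s A; Mv = Q s A - KK A*(2*A+2)*D^9*w*phi A s;
     Mp = Qd s A - KK A*(2*A+2)*(-9*D^8*w*phi A s + D^9*Wd s A*phi A s + D^9*w*phid A s) in
     12/35*(2 * s*Mv/(D^3*w^3) + s^2*(Mp*D*w+3*Mv*(w-D*Wd s A))/(D^4*w^4)))"

lemma y_deriv:
  assumes "W s A \<noteq> 0" "1 - s \<noteq> 0"
  shows "((\<lambda>s. yfun s A) has_real_derivative ydf s A) (at s)"
  unfolding yfun_def[abs_def]
  apply (rule derivative_eq_intros refl W_deriv U_deriv | (use assms in simp; fail))+
  using assms unfolding ydf_def by (simp add: divide_simps; algebra)

lemma Ht_deriv:
  assumes "A \<ge> 1" "\<bar>s\<bar> < 1" "W s A \<noteq> 0"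
  shows "((\<lambda>s. Htilde s A) has_real_derivative HD s A) (at s)"
proof -
  have d: "1 - s \<noteq> 0" using assms by auto
  note pd = phi_deriv[OF assms(1,2)]
  show ?thesis
  unfolding Htilde_def[abs_def] hyp_phi
  apply (rule derivative_eq_intros refl W_deriv Q_deriv pd | (use assms d in simp; fail))+
  using assms d unfolding HD_def Let_def KK_def by (simp add: divide_simps; algebra)
qed

lemma ode_abstract:
  fixes s A q qd w wd u ud p pd K :: real
  assumes d: "1 - s \<noteq> 0" and w: "w \<noteq> 0" and s: "s \<noteq> 0"
    and pdeq: "s * pd = 1/(1-s) - (2*A+2)*p"
    and core: "48*(-3*A*(1-s)*w-36 * s*u)*(q - K*(2*A+2)*(1-s)^9*w*p)
      +45360*((u+ s*ud)*(1-s)*w+ s*u*w- s*u*(1-s)*wd)^2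
      -72*(2*(q - K*(2*A+2)*(1-s)^9*w*p)*(1-s)*w
          +(s*qd - K*(2*A+2)*(-9* s*(1-s)^8*w*p+ s*(1-s)^9*wd*p+(1-s)^8*w*(1-(2*A+2)*p*(1-s))))*(1-s)*w
          +3* s*(q - K*(2*A+2)*(1-s)^9*w*p)*(w-(1-s)*wd)) = 0"
  shows "4*(-3*A - 36 * s * u / ((1-s) * w)) * (12/35 * s^2 * (q / ((1-s)^3 * w^3) - K * (1-s)^6 / w^2 * ((2*A+2) * p)))
     + s^2 * (-36*((u + s * ud)*(1-s)*w + s * u*w - s * u*(1-s)*wd)/((1-s)^2*w^2))^2
     - 6 * s * (12/35*(2 * s*(q - K*(2*A+2)*(1-s)^9*w*p)/((1-s)^3*w^3)
        + s^2*((qd - K*(2*A+2)*(-9*(1-s)^8*w*p + (1-s)^9*wd*p + (1-s)^9*w*pd))*(1-s)*w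
           +3*(q - K*(2*A+2)*(1-s)^9*w*p)*(w-(1-s)*wd))/((1-s)^4*w^4))) = 0"
proof -
  have pd: "pd = (1/(1-s) - (2*A+2)*p)/s" using pdeq s by (simp add: field_simps)
  show ?thesis using core unfolding pd using d w s by (simp add: divide_simps; algebra)
qed

lemma core_poly:
  fixes s A p :: real
  shows "48*(-3*A*(1-s)*W s A-36 * s*U s A)*(Q s A - KK A*(2*A+2)*(1-s)^9*W s A*p)
      +45360*((U s A+ s*Ud s A)*(1-s)*W s A+ s*U s A*W s A- s*U s A*(1-s)*Wd s A)^2
      -72*(2*(Q s A - KK A*(2*A+2)*(1-s)^9*W s A*p)*(1-s)*W s A
          +(s*Qd s A - KK A*(2*A+2)*(-9* s*(1-s)^8*W s A*p+ s*(1-s)^9*Wd s A*p+(1-s)^8*W s A*(1-(2*A+2)*p*(1-s))))*(1-s)*W s A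
          +3* s*(Q s A - KK A*(2*A+2)*(1-s)^9*W s A*p)*(W s A-(1-s)*Wd s A)) = 0"
  unfolding Q_Qe Qe_def Qd_def Wd_def Ud_def KK_def W_def U_def by algebra

lemma ode_sigma:
  assumes A: "A \<ge> 1" and s: "0 < s" "s < 1"
  shows "4*yfun s A*Htilde s A + s^2*(ydf s A)^2 - 6* s*HD s A = 0"
proof -
  have w: "W s A \<noteq> 0" using W_pos[OF A, of s] s by auto
  have d: "1 - s \<noteq> 0" using s by simp
  have s0: "s \<noteq> 0" using s by simp
  have pe: "s * phid A s = 1/(1-s) - (2*A+2)*phi A s" using phid_eq[OF A] s by simp
  note X = ode_abstract[OF d w s0 pe core_poly]
  show ?thesis using X unfolding yfun_def Htilde_def hyp_phi ydf_def HD_def Let_def KK_def .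
qed

lemma Apar_ge: assumes "a > 0" "lam \<ge> 0" shows "Apar a lam \<ge> 1"
  unfolding Apar_def using assms by simp

lemma Y_eq: "(\<lambda>s. Y s a lam) = (\<lambda>s. a * yfun (exp (-a* s)) (Apar a lam))"
  by (simp add: fun_eq_iff Y_def yfun_def Let_def)

lemma sig_bounds: fixes a S :: real assumes "a > 0" "S > 0" shows "0 < exp (-a*S)" "exp (-a*S) < 1"
proof -
  have "a*S > 0" using assms by simp
  hence "-a*S < 0" by simp
  then show "exp (-a*S) < 1" by (metis exp_less_cancel_iff exp_zero)
qed simp

lemma scale_id:
  fixes a y h yd hv s :: real
  shows "4*(a*y)*(a^3*h) + (a*(yd*(s*(-a))))^2 + 6*(a^3*(hv*(s*(-a)))) = a^4*(4*y*h + s^2*yd^2 - 6* s*hv)"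
  by algebra

lemma Y_deriv:
  assumes a: "a > 0" and S: "S > 0" and A: "Apar a lam \<ge> 1"
  shows "((\<lambda>s. Y s a lam) has_real_derivative
           a * (ydf (exp (-a*S)) (Apar a lam) * (exp (-a*S) * (-a)))) (at S)"
proof -
  let ?A = "Apar a lam" and ?s = "exp (-a*S)"
  have s: "0 < ?s" "?s < 1" using sig_bounds[OF a S] by auto
  have w: "W ?s ?A \<noteq> 0" using W_pos[OF A, of ?s] s by auto
  have d: "1 - ?s \<noteq> 0" using s by auto
  have e: "((\<lambda>x. exp (-a*x)) has_real_derivative exp (-a*S) * (-a)) (at S)"
    by (rule derivative_eq_intros refl)+ simp
  have "((\<lambda>x. yfun (exp (-a*x)) ?A) has_real_derivative ydf ?s ?A * (exp (-a*S) * (-a))) (at S)"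
    using DERIV_chain2[where f="\<lambda>s. yfun s ?A", OF y_deriv[OF w d] e] by simp
  then show ?thesis unfolding Y_eq by (rule DERIV_cmult)
qed

lemma H_deriv:
  assumes a: "a > 0" and S: "S > 0" and A: "Apar a lam \<ge> 1"
  shows "(H a lam has_real_derivative
           a^3 * (HD (exp (-a*S)) (Apar a lam) * (exp (-a*S) * (-a)))) (at S)"
proof -
  let ?A = "Apar a lam" and ?s = "exp (-a*S)"
  have s: "0 < ?s" "?s < 1" using sig_bounds[OF a S] by auto
  have w: "W ?s ?A \<noteq> 0" using W_pos[OF A, of ?s] s by auto
  have s1: "\<bar>?s\<bar> < 1" using s by auto
  have e: "((\<lambda>x. exp (-a*x)) has_real_derivative exp (-a*S) * (-a)) (at S)"
    by (rule derivative_eq_intros refl)+ simp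
  have "((\<lambda>x. Htilde (exp (-a*x)) ?A) has_real_derivative HD ?s ?A * (exp (-a*S) * (-a))) (at S)"
    using DERIV_chain2[where f="\<lambda>s. Htilde s ?A", OF Ht_deriv[OF A s1 w] e] by simp
  then have "((\<lambda>x. a^3 * Htilde (exp (-a*x)) ?A) has_real_derivative a^3 * (HD ?s ?A * (exp (-a*S) * (-a)))) (at S)"
    by (rule DERIV_cmult)
  then show ?thesis unfolding H_def[abs_def] .
qed

lemma H_solves:
  assumes a: "a > 0" and A: "Apar a lam \<ge> 1"
  shows "solves_ode a lam (H a lam)"
  unfolding solves_ode_def
proof (intro allI impI conjI)
  fix S :: real assume S: "S > 0"
  let ?A = "Apar a lam" and ?s = "exp (-a*S)"
  note Yd = Y_deriv[OF a S A] and Hd = H_deriv[OF a S A]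
  show "(\<lambda>s. Y s a lam) differentiable (at S)" using Yd real_differentiable_def by blast
  show "H a lam differentiable (at S)" using Hd real_differentiable_def by blast
  have s: "0 < ?s" "?s < 1" using sig_bounds[OF a S] by auto
  have O: "4*yfun ?s ?A*Htilde ?s ?A + ?s^2*(ydf ?s ?A)^2 - 6*?s*HD ?s ?A = 0"
    by (rule ode_sigma[OF A s])
  have "Y S a lam = a * yfun ?s ?A" using Y_eq[of a lam] by (metis)
  moreover have "H a lam S = a^3 * Htilde ?s ?A" by (simp add: H_def)
  moreover note DERIV_imp_deriv[OF Yd] DERIV_imp_deriv[OF Hd]
  ultimately have "4 * Y S a lam * H a lam S + (deriv (\<lambda>s. Y s a lam) S)\<^sup>2 + 6 * deriv (H a lam) S
     = a^4 * (4*yfun ?s ?A*Htilde ?s ?A + ?s^2*(ydf ?s ?A)^2 - 6*?s*HD ?s ?A)"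
    by (simp only: scale_id)
  then show "4 * Y S a lam * H a lam S + (deriv (\<lambda>s. Y s a lam) S)\<^sup>2 + 6 * deriv (H a lam) S = 0"
    using O by simp
qed

lemma exp_neg_lim: fixes a :: real assumes "a > 0" shows "((\<lambda>S. exp (-a*S)) \<longlongrightarrow> 0) at_top"
  using assms by real_asymp

lemma H_lim:
  assumes a: "a > 0" and A: "Apar a lam \<ge> 1"
  shows "(H a lam \<longlongrightarrow> 0) at_top"
proof -
  let ?A = "Apar a lam"
  have w: "W 0 ?A \<noteq> 0" using W_pos[OF A, of 0] by auto
  have "isCont (\<lambda>s. Htilde s ?A) 0"
    using Ht_deriv[OF A _ w] by (auto intro: DERIV_isCont)
  from isCont_tendsto_compose[OF this exp_neg_lim[OF a]]
  have "((\<lambda>S. Htilde (exp (-a*S)) ?A) \<longlongrightarrow> 0) at_top" by (simp add: Htilde_def)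
  from tendsto_mult[OF tendsto_const[of "a^3"] this]
  show ?thesis unfolding H_def[abs_def] by simp
qed

lemma Y_neg:
  assumes a: "a > 0" and A: "Apar a lam \<ge> 1" and S: "S > 0"
  shows "Y S a lam < 0"
proof -
  let ?A = "Apar a lam" and ?s = "exp (-a*S)"
  have s: "0 < ?s" "?s < 1" using sig_bounds[OF a S] by auto
  have w: "W ?s ?A > 0" using W_pos[OF A, of ?s] s by auto
  have u: "U ?s ?A > 0" using U_pos[OF A, of ?s] s by auto
  have "36 * ?s * U ?s ?A / ((1 - ?s) * W ?s ?A) \<ge> 0" using s w u by simp
  hence "yfun ?s ?A < 0" unfolding yfun_def using A by simp
  moreover have "Y S a lam = a * yfun ?s ?A" using Y_eq[of a lam] by metis
  ultimately show ?thesis using a by (simp add: mult_pos_neg)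
qed

lemma uniq:
  assumes a: "a > 0" and A: "Apar a lam \<ge> 1"
    and G: "solves_ode a lam G" and Gl: "(G \<longlongrightarrow> 0) at_top" and S: "S > 0"
  shows "G S = H a lam S"
proof (rule ccontr)
  assume ne: "G S \<noteq> H a lam S"
  define f where "f x = (G x - H a lam x)^2" for x
  have fpos: "f S > 0" using ne by (simp add: f_def)
  have HS: "solves_ode a lam (H a lam)" by (rule H_solves[OF a A])
  have mono: "f S \<le> f x" if "S \<le> x" for x
  proof (rule DERIV_nonneg_imp_nondecreasing[OF that])
    fix t assume "S \<le> t" "t \<le> x"
    then have t: "t > 0" using S by simp
    from G t have G1: "G differentiable (at t)"
      and Ge: "4 * Y t a lam * G t + (deriv (\<lambda>s. Y s a lam) t)^2 + 6 * deriv G t = 0"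
      unfolding solves_ode_def by auto
    from HS t have H1: "H a lam differentiable (at t)"
      and He: "4 * Y t a lam * H a lam t + (deriv (\<lambda>s. Y s a lam) t)^2 + 6 * deriv (H a lam) t = 0"
      unfolding solves_ode_def by auto
    have dG: "(G has_real_derivative deriv G t) (at t)" using G1 by (simp add: DERIV_deriv_iff_real_differentiable)
    have dH: "(H a lam has_real_derivative deriv (H a lam) t) (at t)" using H1 by (simp add: DERIV_deriv_iff_real_differentiable)
    have df: "(f has_real_derivative 2 * (G t - H a lam t) * (deriv G t - deriv (H a lam) t)) (at t)"
      unfolding f_def[abs_def]
      by (rule derivative_eq_intros dG dH refl)+ simp
    have Yn: "Y t a lam < 0" by (rule Y_neg[OF a A t])
    have e6: "6 * (deriv G t - deriv (H a lam) t) = - 4 * Y t a lam * (G t - H a lam t)"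
      using Ge He by (simp add: algebra_simps)
    have "12 * ((G t - H a lam t) * (deriv G t - deriv (H a lam) t)) = -8 * Y t a lam * (G t - H a lam t)^2"
      using e6 by (simp add: power2_eq_square) algebra
    moreover have "-8 * Y t a lam * (G t - H a lam t)^2 \<ge> 0" using Yn
      by (simp add: mult_nonpos_nonneg)
    ultimately have "(G t - H a lam t) * (deriv G t - deriv (H a lam) t) \<ge> 0" by linarith
    hence "2 * (G t - H a lam t) * (deriv G t - deriv (H a lam) t) \<ge> 0"
      by (metis mult.assoc mult_nonneg_nonneg zero_le_numeral)
    with df show "\<exists>y. DERIV f t :> y \<and> 0 \<le> y" by blast
  qed
  have "((\<lambda>x. (G x - H a lam x)^2) \<longlongrightarrow> (0 - 0)^2) at_top"
    by (intro tendsto_intros Gl H_lim[OF a A])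
  then have fl: "(f \<longlongrightarrow> 0) at_top" by (simp add: f_def[abs_def])
  have "eventually (\<lambda>x. f x < f S) at_top" by (rule order_tendstoD(2)[OF fl fpos])
  then obtain N where N: "\<forall>x\<ge>N. f x < f S" by (auto simp: eventually_at_top_linorder)
  then have "f (max N S) < f S" by simp
  moreover have "f S \<le> f (max N S)" by (rule mono) simp
  ultimately show False by simp
qed

definition Rf :: "real \<Rightarrow> real \<Rightarrow> real" where
  "Rf A s = Q s A / ((1-s)^3 * (W s A)^3)
      - A*(A-1)*(A^2-1)*(4*A^2-1)*(4*A^2-9) * (1-s)^6 / (W s A)^2 * ((2*A+2) * phi A s)"

lemma Ht_R: "Htilde s A = 12/35 * s^2 * Rf A s"
  unfolding Htilde_def Rf_def hyp_phi by simp

lemma R0: assumes A: "A \<ge> 1" shows "12/35 * Rf A 0 = 108 / ((A+1)*(2*A+1)^2)"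
proof -
  have W0: "W 0 A = (A+1)*(2*A+1)*(2*A+3)" by (simp add: W_def; algebra)
  have c: "2*A+2 \<noteq> 0" "A+1\<noteq>0" "2*A+1 \<noteq>0" "2*A+3\<noteq>0" using A by auto
  have p: "(2*A+2) * phi A 0 = 1" using c by (simp add: phi_0)
  show ?thesis unfolding Rf_def p using c
    by (simp add: W0 Q_Qe Qe_def divide_simps; algebra)
qed

lemma R_deriv0: assumes A: "A \<ge> 1" shows "\<exists>D. (Rf A has_real_derivative D) (at 0)"
proof -
  have w: "W 0 A \<noteq> 0" using W_pos[OF A, of 0] by auto
  have pd: "(phi A has_real_derivative phid A 0) (at 0)" using phi_deriv[OF A, of 0] by simp
  show ?thesis unfolding Rf_def[abs_def]
    apply (rule exI)
    apply (rule derivative_eq_intros refl W_deriv Q_deriv pd | (use w in simp; fail))+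
    done
qed

lemma bigO_part:
  assumes A: "A \<ge> 1"
  shows "(\<lambda>\<sigma>. Htilde \<sigma> A - 108*\<sigma>^2 / ((A + 1) * (2*A + 1)^2)) \<in> O[at_right 0](\<lambda>\<sigma>. \<sigma>^3)"
proof -
  obtain D where D: "(Rf A has_real_derivative D) (at 0)" using R_deriv0[OF A] by blast
  hence "((\<lambda>y. (Rf A y - Rf A 0)/(y - 0)) \<longlongrightarrow> D) (at 0)" by (simp only: has_field_derivative_iff)
  hence "((\<lambda>y. (Rf A y - Rf A 0)/y) \<longlongrightarrow> D) (at 0)" by simp
  hence L: "((\<lambda>y. (Rf A y - Rf A 0)/y) \<longlongrightarrow> D) (at_right 0)"
    by (rule tendsto_mono[OF at_le[OF subset_UNIV]])
  have "((\<lambda>y. 12/35 * ((Rf A y - Rf A 0)/y)) \<longlongrightarrow> 12/35*D) (at_right 0)" by (intro tendsto_intros L)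
  moreover have "eventually (\<lambda>y. 12/35 * ((Rf A y - Rf A 0)/y)
      = (Htilde y A - 108*y^2 / ((A + 1) * (2*A + 1)^2)) / y^3) (at_right 0)"
    using eventually_at_right_less[of "0::real"]
  proof eventually_elim
    case (elim y)
    have "108*y^2 / ((A + 1) * (2*A + 1)^2) = y^2 * (12/35 * Rf A 0)" unfolding R0[OF A] by simp
    hence "Htilde y A - 108*y^2 / ((A + 1) * (2*A + 1)^2) = 12/35*y^2*(Rf A y - Rf A 0)"
      by (simp add: Ht_R algebra_simps)
    note eq = this
    show ?case unfolding eq using elim by (simp add: field_simps power3_eq_cube power2_eq_square)
  qed
  ultimately have "((\<lambda>y. (Htilde y A - 108*y^2 / ((A + 1) * (2*A + 1)^2)) / y^3) \<longlongrightarrow> 12/35*D) (at_right 0)"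
    by (rule Lim_transform_eventually)
  then show ?thesis
    by (rule bigoI_tendsto) (use eventually_at_right_less[of "0::real"] in \<open>auto elim: eventually_mono\<close>)
qed

theorem mainTheorem3:
  fixes a lam :: real
  assumes "a > 0" and "lam \<ge> 0"
  shows "solves_ode a lam (H a lam)
    \<and> ((H a lam) \<longlongrightarrow> 0) at_top
    \<and> (\<forall>G. solves_ode a lam G \<and> (G \<longlongrightarrow> 0) at_top \<longrightarrow> (\<forall>S>0. G S = H a lam S))
    \<and> (\<lambda>\<sigma>. Htilde \<sigma> (Apar a lam)
          - 108*\<sigma>^2 / ((Apar a lam + 1) * (2*Apar a lam + 1)^2)) \<in> O[at_right 0](\<lambda>\<sigma>. \<sigma>^3)"
proof -
  have A: "Apar a lam \<ge> 1" by (rule Apar_ge[OF assms])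
  show ?thesis
    using H_solves[OF assms(1) A] H_lim[OF assms(1) A] uniq[OF assms(1) A] bigO_part[OF A]
    by blast
qed

end
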